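(* Let $n \ge 2$ and let $K, L$ be compact convex subsets of $\mathbb{R}^n$. Suppose that for every unit vector $u$, the projection $L_u$ contains a translate of $K_u$. Then there exists $x \in \mathbb{R}^n$ such that $$K + x \subseteq \tfrac{n}{n-1} L.$$
   Context: For a set $S \subseteq \mathbb{R}^n$ and a unit vector $u$, $S_u$ denotes the orthogonal projection of $S$ onto the hyperplane $u^\perp$. "$A$ contains a translate of $B$" means $B+w\subseteq A$ for some vector $w$. For $c>0$, $cL=\{cy : y\in L\}$. *)

theory Defs
  imports "HOL-Analysis.Analysis"
begin

definition proj_hyp :: "'a::euclidean_space \<Rightarrow> 'a set \<Rightarrow> 'a set" where
  "proj_hyp u S = (\<lambda>y. y - (y \<bullet> u) *\<^sub>R u) ` S"

definition contains_translate :: "'a::real_vector set \<Rightarrow> 'a set \<Rightarrow> bool" where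
  "contains_translate A B \<longleftrightarrow> (\<exists>w. (\<lambda>y. y + w) ` B \<subseteq> A)"

end

theory Submission
  imports Defs
begin


lemma hyp_use:
  fixes K L :: "'a::euclidean_space set"
  assumes "contains_translate (proj_hyp u L) (proj_hyp u K)"
  obtains w where "\<And>y f. y \<in> K \<Longrightarrow> f \<bullet> u = 0 \<Longrightarrow> \<exists>l\<in>L. y \<bullet> f = l \<bullet> f - w \<bullet> f"
proof -
  obtain w where w: "(\<lambda>y. y + w) ` proj_hyp u K \<subseteq> proj_hyp u L"
    using assms unfolding contains_translate_def by blast
  have "\<exists>l\<in>L. y \<bullet> f = l \<bullet> f - w \<bullet> f" if "y \<in> K" "f \<bullet> u = 0" for y f
  proof -
    have "(y - (y \<bullet> u) *\<^sub>R u) + w \<in> proj_hyp u L"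
      using w that(1) unfolding proj_hyp_def by blast
    then obtain l where l: "l \<in> L" "(y - (y \<bullet> u) *\<^sub>R u) + w = l - (l \<bullet> u) *\<^sub>R u"
      unfolding proj_hyp_def by blast
    have "((y - (y \<bullet> u) *\<^sub>R u) + w) \<bullet> f = (l - (l \<bullet> u) *\<^sub>R u) \<bullet> f"
      using l(2) by simp
    then have "y \<bullet> f + w \<bullet> f = l \<bullet> f"
      using that(2) by (simp add: inner_diff_left inner_diff_right inner_add_left inner_add_right inner_commute)
    then show ?thesis using l(1) by (intro bexI[of _ l]) auto
  qed
  then show ?thesis using that by blast
qed

lemma pair_ineq:
  fixes K L :: "'a::euclidean_space set" and k r q :: "nat \<Rightarrow> 'a"
  assumes n: "DIM('a) = n"
    and cK: "convex K" and kK: "\<And>i. i \<le> n \<Longrightarrow> k i \<in> K"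
    and hyp: "\<And>u. norm u = 1 \<Longrightarrow> contains_translate (proj_hyp u L) (proj_hyp u K)"
    and qL: "\<And>i. i \<le> n \<Longrightarrow> q i \<in> L"
    and qmax: "\<And>i l. i \<le> n \<Longrightarrow> l \<in> L \<Longrightarrow> r i \<bullet> l \<le> r i \<bullet> q i"
    and rsum: "sum r {..n} = 0"
    and ab: "a \<le> n" "b \<le> n" "a \<noteq> b"
  shows "(\<Sum>i\<in>{..n}-{a,b}. k i \<bullet> r i) + ((1/2) *\<^sub>R (k a + k b)) \<bullet> (r a + r b)
         \<le> (\<Sum>i\<le>n. q i \<bullet> r i)"
proof -
  define D where "D = {..n} - {a,b}"
  have finD: "finite D" unfolding D_def by simp
  have cardD: "card D = n - 1"
    unfolding D_def using ab by (simp add: card_Diff_subset)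
  define W where "W = r ` D"
  have "dim W \<le> card W" by (rule dim_le_card) (auto simp: W_def finD span_base)
  also have "card W \<le> card D" unfolding W_def using finD by (rule card_image_le)
  finally have dW: "dim W < DIM('a)" using cardD n ab by linarith
  obtain x where x: "x \<noteq> 0" "\<And>y. y \<in> span W \<Longrightarrow> orthogonal x y"
    using orthogonal_to_subspace_exists[OF dW] by metis
  define u where "u = x /\<^sub>R norm x"
  have nu: "norm u = 1" using x(1) unfolding u_def by simp
  have orth: "y \<bullet> u = 0" if "y \<in> span W" for y
    using x(2)[OF that] unfolding u_def orthogonal_def by (simp add: inner_commute)
  obtain w where w: "\<And>y f. y \<in> K \<Longrightarrow> f \<bullet> u = 0 \<Longrightarrow> \<exists>l\<in>L. y \<bullet> f = l \<bullet> f - w \<bullet> f"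
    using hyp_use[OF hyp[OF nu]] by blast
  have sumall: "sum g {..n} = sum g D + g a + g b" for g :: "nat \<Rightarrow> 'a"
  proof -
    have e: "{..n} = insert a (insert b D)" using ab unfolding D_def by auto
    have "sum g (insert a (insert b D)) = g a + (g b + sum g D)"
      using finD ab by (simp add: D_def)
    then show ?thesis unfolding e by (simp add: add_ac)
  qed
  have sumallr: "sum g {..n} = sum g D + g a + g b" for g :: "nat \<Rightarrow> real"
  proof -
    have e: "{..n} = insert a (insert b D)" using ab unfolding D_def by auto
    have "sum g (insert a (insert b D)) = g a + (g b + sum g D)"
      using finD ab by (simp add: D_def)
    then show ?thesis unfolding e by linarith
  qed
  have i1: "k i \<bullet> r i \<le> q i \<bullet> r i - w \<bullet> r i" if "i \<in> D" for i
  proof -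
    have iD: "i \<le> n" using that unfolding D_def by auto
    have "r i \<in> span W" unfolding W_def using that by (simp add: span_base)
    then obtain l where l: "l \<in> L" "k i \<bullet> r i = l \<bullet> r i - w \<bullet> r i"
      using w[OF kK[OF iD] orth] by blast
    show ?thesis using l qmax[OF iD l(1)] by (simp add: inner_commute)
  qed
  have s1: "(\<Sum>i\<in>D. k i \<bullet> r i) \<le> (\<Sum>i\<in>D. q i \<bullet> r i) - w \<bullet> sum r D"
  proof -
    have "(\<Sum>i\<in>D. k i \<bullet> r i) \<le> (\<Sum>i\<in>D. q i \<bullet> r i - w \<bullet> r i)"
      using i1 by (rule sum_mono)
    then show ?thesis by (simp add: sum_subtractf inner_sum_right)
  qed
  have mK: "(1/2) *\<^sub>R (k a + k b) \<in> K"
  proof -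
    have "(1/2) *\<^sub>R k a + (1/2) *\<^sub>R k b \<in> K"
      using convexD[OF cK kK[OF ab(1)] kK[OF ab(2)], of "1/2" "1/2"] by simp
    then show ?thesis by (simp add: scaleR_right_distrib)
  qed
  have "r a + r b = - sum r D" using rsum sumall[of r] by (simp add: eq_neg_iff_add_eq_0 add_ac)
  then have "r a + r b \<in> span W" unfolding W_def
    by (simp add: span_neg span_sum span_base)
  then obtain l where l: "l \<in> L"
     "((1/2) *\<^sub>R (k a + k b)) \<bullet> (r a + r b) = l \<bullet> (r a + r b) - w \<bullet> (r a + r b)"
    using w[OF mK orth] by blast
  have "l \<bullet> (r a + r b) \<le> q a \<bullet> r a + q b \<bullet> r b"
    using qmax[OF ab(1) l(1)] qmax[OF ab(2) l(1)] by (simp add: inner_add_right inner_commute)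
  then have s2: "((1/2) *\<^sub>R (k a + k b)) \<bullet> (r a + r b) \<le> q a \<bullet> r a + q b \<bullet> r b - w \<bullet> (r a + r b)"
    using l(2) by linarith
  have "w \<bullet> sum r D + w \<bullet> (r a + r b) = 0"
  proof -
    have "sum r D + (r a + r b) = 0" using rsum sumall[of r] by (simp add: add_ac)
    then show ?thesis by (metis inner_add_right inner_zero_right)
  qed
  then show ?thesis using s1 s2 sumallr[of "\<lambda>i. q i \<bullet> r i"] unfolding D_def[symmetric] by linarith
qed

lemma sum_helper:
  "(\<Sum>a\<le>n. (X::real) - f a - Z + g a - V)
    = (real n + 1) * X - sum f {..n} - (real n + 1) * Z + sum g {..n} - (real n + 1) * V"
  by (simp add: sum.distrib sum_subtractf add.commute)

lemma fin_core:
  fixes K L :: "'a::euclidean_space set" and k r q :: "nat \<Rightarrow> 'a"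
  assumes n: "DIM('a) = n"
    and cK: "convex K" and kK: "\<And>i. i \<le> n \<Longrightarrow> k i \<in> K"
    and hyp: "\<And>u. norm u = 1 \<Longrightarrow> contains_translate (proj_hyp u L) (proj_hyp u K)"
    and qL: "\<And>i. i \<le> n \<Longrightarrow> q i \<in> L"
    and qmax: "\<And>i l. i \<le> n \<Longrightarrow> l \<in> L \<Longrightarrow> r i \<bullet> l \<le> r i \<bullet> q i"
    and rsum: "sum r {..n} = 0"
  shows "(real n - 1) * (\<Sum>i\<le>n. k i \<bullet> r i) \<le> real n * (\<Sum>i\<le>n. q i \<bullet> r i)"
proof -
  define A where "A = (\<Sum>i\<le>n. k i \<bullet> r i)"
  define Q where "Q = (\<Sum>i\<le>n. q i \<bullet> r i)"
  define T where "T a b = A - (1/2) * (k a \<bullet> r a) - (1/2) * (k b \<bullet> r b)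
     + (1/2) * (k a \<bullet> r b) + (1/2) * (k b \<bullet> r a)" for a b
  have TQ: "T a b \<le> Q" if "a \<le> n" "b \<le> n" "a \<noteq> b" for a b
  proof -
    define D where "D = {..n} - {a,b}"
    have finD: "finite D" unfolding D_def by simp
    have e: "{..n} = insert a (insert b D)" using that unfolding D_def by auto
    have "A = (\<Sum>i\<in>insert a (insert b D). k i \<bullet> r i)" unfolding A_def by (simp only: e)
    also have "\<dots> = k a \<bullet> r a + (k b \<bullet> r b + (\<Sum>i\<in>D. k i \<bullet> r i))"
      using finD that by (simp add: D_def)
    finally have sD: "(\<Sum>i\<in>D. k i \<bullet> r i) = A - k a \<bullet> r a - k b \<bullet> r b" by linarith
    have mid: "((1/2) *\<^sub>R (k a + k b)) \<bullet> (r a + r b) = (1/2) * (k a \<bullet> r a) + (1/2) * (k b \<bullet> r b)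
     + (1/2) * (k a \<bullet> r b) + (1/2) * (k b \<bullet> r a)"
      by (simp add: inner_add_left inner_add_right algebra_simps)
    have "(\<Sum>i\<in>{..n}-{a,b}. k i \<bullet> r i) + ((1/2) *\<^sub>R (k a + k b)) \<bullet> (r a + r b) \<le> Q"
      unfolding Q_def by (rule pair_ineq[OF n cK kK hyp qL qmax rsum that])
    then show ?thesis using sD mid unfolding D_def T_def by linarith
  qed
  have rowsum: "(\<Sum>b\<le>n. T a b) = (real n + 1) * A - ((real n + 1)/2) * (k a \<bullet> r a) - (1/2) * A
       + (1/2) * ((\<Sum>b\<le>n. k b) \<bullet> r a)" for a
  proof -
    have "(\<Sum>b\<le>n. T a b) = (\<Sum>b\<le>n. A) - (\<Sum>b\<le>n. (1/2) * (k a \<bullet> r a)) - (\<Sum>b\<le>n. (1/2) * (k b \<bullet> r b))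
       + (\<Sum>b\<le>n. (1/2) * (k a \<bullet> r b)) + (\<Sum>b\<le>n. (1/2) * (k b \<bullet> r a))"
      unfolding T_def by (simp add: sum.distrib sum_subtractf algebra_simps)
    also have "\<dots> = (real n + 1) * A - ((real n + 1)/2) * (k a \<bullet> r a) - (1/2) * A
       + (1/2) * (k a \<bullet> sum r {..n}) + (1/2) * ((\<Sum>b\<le>n. k b) \<bullet> r a)"
      by (simp add: sum_divide_distrib[symmetric] inner_sum_right inner_sum_left A_def add.commute)
    finally show ?thesis using rsum by simp
  qed
  have offsum: "(\<Sum>b\<in>{..n}-{a}. T a b) = (\<Sum>b\<le>n. T a b) - A" if "a \<le> n" for a
  proof -
    have "T a a = A" unfolding T_def by simp
    then show ?thesis using that by (simp add: sum_diff1)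
  qed
  have "(\<Sum>a\<le>n. \<Sum>b\<in>{..n}-{a}. T a b) = (\<Sum>a\<le>n. (\<Sum>b\<le>n. T a b) - A)"
    by (rule sum.cong) (simp_all add: offsum)
  also have "\<dots> = (\<Sum>a\<le>n. (real n + 1) * A - ((real n + 1)/2) * (k a \<bullet> r a) - (1/2) * A
       + (1/2) * ((\<Sum>b\<le>n. k b) \<bullet> r a) - A)"
    by (simp add: rowsum)
  also have "\<dots> = (real n + 1) * ((real n + 1) * A) - ((real n + 1)/2) * A - (real n + 1) * ((1/2) * A)
       + (1/2) * ((\<Sum>b\<le>n. k b) \<bullet> sum r {..n}) - (real n + 1) * A"
  proof -
    have s1: "(\<Sum>a\<le>n. ((real n + 1)/2) * (k a \<bullet> r a)) = ((real n + 1)/2) * A"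
      unfolding A_def by (simp add: sum_distrib_left)
    have s2: "(\<Sum>a\<le>n. (1/2) * ((\<Sum>b\<le>n. k b) \<bullet> r a)) = (1/2) * ((\<Sum>b\<le>n. k b) \<bullet> sum r {..n})"
      by (simp only: sum_distrib_left[symmetric] inner_sum_right)
    have h: "(\<Sum>a\<le>n. (real n + 1) * A - ((real n + 1)/2) * (k a \<bullet> r a) - (1/2) * A
       + (1/2) * ((\<Sum>b\<le>n. k b) \<bullet> r a) - A) = (real n + 1) * ((real n + 1) * A)
       - (\<Sum>a\<le>n. ((real n + 1)/2) * (k a \<bullet> r a)) - (real n + 1) * ((1/2) * A)
       + (\<Sum>a\<le>n. (1/2) * ((\<Sum>b\<le>n. k b) \<bullet> r a)) - (real n + 1) * A"
      by (rule sum_helper)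
    show ?thesis unfolding h s1 s2 ..
  qed
  also have "\<dots> = (real n + 1) * ((real n - 1) * A)"
  proof -
    have "(1/2) * ((\<Sum>b\<le>n. k b) \<bullet> sum r {..n}) = 0" using rsum by simp
    then show ?thesis by (simp add: field_simps)
  qed
  finally have lhs: "(\<Sum>a\<le>n. \<Sum>b\<in>{..n}-{a}. T a b) = (real n + 1) * ((real n - 1) * A)" .
  have "(\<Sum>a\<le>n. \<Sum>b\<in>{..n}-{a}. T a b) \<le> (\<Sum>a\<le>n. \<Sum>b\<in>{..n}-{a}. Q)"
    by (intro sum_mono) (auto intro: TQ)
  also have "\<dots> = (real n + 1) * (real n * Q)"
    by simp
  finally have "(real n + 1) * ((real n - 1) * A) \<le> (real n + 1) * (real n * Q)" using lhs by simp
  then show ?thesis unfolding A_def[symmetric] Q_def[symmetric]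
    by (simp add: mult_le_cancel_left_pos)
qed

lemma norm_diff_scale_sq:
  fixes a b :: "'a::real_inner"
  shows "(norm (a - t *\<^sub>R b))\<^sup>2 = (norm a)\<^sup>2 - 2 * t * (a \<bullet> b) + t\<^sup>2 * (norm b)\<^sup>2"
  unfolding power2_norm_eq_inner
  by (simp add: inner_diff_left inner_diff_right inner_commute algebra_simps power2_eq_square)

lemma fin_exists:
  fixes K L :: "'a::euclidean_space set" and k :: "nat \<Rightarrow> 'a"
  assumes n: "DIM('a) = n" and n2: "n \<ge> 2"
    and cK: "convex K" and cL: "convex L" and kL: "compact L"
    and hyp: "\<And>u. norm u = 1 \<Longrightarrow> contains_translate (proj_hyp u L) (proj_hyp u K)"
    and kK: "\<And>i. i \<le> n \<Longrightarrow> k i \<in> K"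
  shows "\<exists>x. \<forall>i\<le>n. k i + x \<in> (\<lambda>y. (real n / (real n - 1)) *\<^sub>R y) ` L"
proof -
  define c where "c = real n / (real n - 1)"
  define C where "C = (\<lambda>y. c *\<^sub>R y) ` L"
  have cpos: "c > 0" unfolding c_def using n2 by simp
  have cn: "(real n - 1) * c = real n" unfolding c_def using n2 by simp
  have Lne: "L \<noteq> {}"
  proof -
    obtain b :: 'a where b: "b \<in> Basis" using nonempty_Basis by blast
    have "norm b = 1" using b by simp
    from hyp[OF this] obtain w where w: "(\<lambda>y. y + w) ` proj_hyp b K \<subseteq> proj_hyp b L"
      unfolding contains_translate_def by blast
    have "proj_hyp b K \<noteq> {}" using kK[of 0] unfolding proj_hyp_def by auto
    then have "proj_hyp b L \<noteq> {}" using w by blast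
    then show ?thesis unfolding proj_hyp_def by auto
  qed
  have compC: "compact C" unfolding C_def by (rule compact_scaling[OF kL])
  have convC: "convex C" unfolding C_def by (rule convex_scaling[OF cL])
  have closC: "closed C" using compC by (rule compact_imp_closed)
  have Cne: "C \<noteq> {}" using Lne unfolding C_def by auto
  define phi where "phi x = (\<Sum>i\<le>n. (infdist (k i + x) C)\<^sup>2)" for x
  have contphi: "continuous_on UNIV phi" unfolding phi_def by (intro continuous_intros)
  have phinn: "phi x \<ge> 0" for x unfolding phi_def by (intro sum_nonneg) auto
  define M where "M = phi 0"
  define S where "S = {x. phi x \<le> M}"
  have closS: "closed S" unfolding S_def by (rule closed_Collect_le[OF contphi]) simp
  obtain B where B: "\<And>p. p \<in> C \<Longrightarrow> norm p \<le> B"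
    using compact_imp_bounded[OF compC] unfolding bounded_iff by blast
  have "S \<subseteq> cball 0 (1 + M + B + norm (k 0))"
  proof
    fix x assume "x \<in> S"
    then have "phi x \<le> M" unfolding S_def by simp
    moreover have "(infdist (k 0 + x) C)\<^sup>2 \<le> phi x"
      unfolding phi_def by (rule member_le_sum) auto
    ultimately have d2: "(infdist (k 0 + x) C)\<^sup>2 \<le> M" by linarith
    have d: "infdist (k 0 + x) C \<le> 1 + M"
    proof (rule ccontr)
      assume "\<not> ?thesis"
      then have gt: "infdist (k 0 + x) C > 1 + M" by simp
      have "M \<ge> 0" unfolding M_def by (rule phinn)
      then have "infdist (k 0 + x) C \<le> (infdist (k 0 + x) C)\<^sup>2"
        using gt by (simp add: power2_eq_square)
      then show False using gt d2 by linarith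
    qed
    obtain p where p: "p \<in> C" "infdist (k 0 + x) C = dist (k 0 + x) p"
      using infdist_attains_inf[OF closC Cne] by blast
    have "norm x \<le> norm (k 0 + x - p) + norm p + norm (k 0)"
      using norm_triangle_ineq4[of "(k 0 + x - p) + p" "k 0"] norm_triangle_ineq[of "k 0 + x - p" p]
      by simp
    then show "x \<in> cball 0 (1 + M + B + norm (k 0))"
      using B[OF p(1)] d p(2) by (simp add: dist_norm)
  qed
  then have compS: "compact S" using closS by (metis bounded_cball bounded_subset compact_eq_bounded_closed)
  have "0 \<in> S" unfolding S_def M_def by simp
  then obtain xs where xsS: "xs \<in> S" and xsmin0: "\<And>y. y \<in> S \<Longrightarrow> phi xs \<le> phi y"
    using continuous_attains_inf[OF compS _ continuous_on_subset[OF contphi]] by blast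
  have xsmin: "phi xs \<le> phi y" for y
  proof (cases "y \<in> S")
    case True then show ?thesis by (rule xsmin0)
  next
    case False then show ?thesis using xsS unfolding S_def by auto
  qed
  have "\<forall>i. \<exists>p. p \<in> C \<and> infdist (k i + xs) C = dist (k i + xs) p"
  proof
    fix i show "\<exists>p. p \<in> C \<and> infdist (k i + xs) C = dist (k i + xs) p"
      by (rule infdist_attains_inf[OF closC Cne, of "k i + xs"]) blast
  qed
  from choice[OF this] obtain p where p': "\<forall>i. p i \<in> C \<and> infdist (k i + xs) C = dist (k i + xs) (p i)"
    by blast
  have p: "\<And>i. p i \<in> C" "\<And>i. infdist (k i + xs) C = dist (k i + xs) (p i)"
    using p' by auto
  define r where "r i = k i + xs - p i" for i
  have dr: "infdist (k i + xs) C = norm (r i)" for i using p(2)[of i] unfolding r_def by (simp add: dist_norm)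
  have var: "r i \<bullet> (y - p i) \<le> 0" if "y \<in> C" for i y
  proof -
    have "\<forall>z\<in>C. dist (k i + xs) (p i) \<le> dist (k i + xs) z"
    proof
      fix z assume "z \<in> C"
      then show "dist (k i + xs) (p i) \<le> dist (k i + xs) z"
        using infdist_le[OF \<open>z \<in> C\<close>, of "k i + xs"] p(2)[of i] by simp
    qed
    then show ?thesis unfolding r_def using any_closest_point_dot[OF convC closC p(1) that] by blast
  qed
  have phixs: "phi xs = (\<Sum>i\<le>n. (norm (r i))\<^sup>2)" unfolding phi_def by (simp add: dr)
  define R where "R = sum r {..n}"
  define t where "t = 1 / (real n + 1)"
  have R0: "R = 0"
  proof -
    have "phi (xs - t *\<^sub>R R) \<le> (\<Sum>i\<le>n. (norm (r i - t *\<^sub>R R))\<^sup>2)"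
      unfolding phi_def
    proof (rule sum_mono)
      fix i
      have "infdist (k i + (xs - t *\<^sub>R R)) C \<le> dist (k i + (xs - t *\<^sub>R R)) (p i)"
        by (rule infdist_le[OF p(1)])
      also have "\<dots> = norm (r i - t *\<^sub>R R)" unfolding r_def dist_norm by (simp add: algebra_simps)
      finally show "(infdist (k i + (xs - t *\<^sub>R R)) C)\<^sup>2 \<le> (norm (r i - t *\<^sub>R R))\<^sup>2"
        by (intro power_mono) (auto simp: infdist_nonneg)
    qed
    also have "\<dots> = (\<Sum>i\<le>n. (norm (r i))\<^sup>2) - 2 * t * (\<Sum>i\<le>n. r i \<bullet> R) + (real n + 1) * (t\<^sup>2 * (norm R)\<^sup>2)"
      by (simp add: norm_diff_scale_sq sum.distrib sum_subtractf sum_distrib_left)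
    also have "(\<Sum>i\<le>n. r i \<bullet> R) = (norm R)\<^sup>2"
      unfolding R_def by (simp add: inner_sum_left[symmetric] power2_norm_eq_inner)
    finally have "phi (xs - t *\<^sub>R R) \<le> phi xs - 2 * t * (norm R)\<^sup>2 + (real n + 1) * (t\<^sup>2 * (norm R)\<^sup>2)"
      using phixs by simp
    moreover have "(real n + 1) * (t\<^sup>2 * (norm R)\<^sup>2) = t * (norm R)\<^sup>2"
    proof -
      have nt: "(real n + 1) * t = 1" unfolding t_def by simp
      have "(real n + 1) * (t\<^sup>2 * (norm R)\<^sup>2) = ((real n + 1) * t) * (t * (norm R)\<^sup>2)"
        by (simp add: power2_eq_square algebra_simps)
      then show ?thesis using nt by simp
    qed
    ultimately have "t * (norm R)\<^sup>2 \<le> 0" using xsmin[of "xs - t *\<^sub>R R"] by linarith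
    moreover have "t > 0" unfolding t_def by simp
    ultimately have "(norm R)\<^sup>2 \<le> 0" by (simp add: mult_le_0_iff)
    then show ?thesis by simp
  qed
  have rs: "sum r {..n} = 0" using R0 unfolding R_def by simp
  show ?thesis
  proof (cases "phi xs = 0")
    case True
    have "\<forall>i\<in>{..n}. (infdist (k i + xs) C)\<^sup>2 = 0"
      using True unfolding phi_def by (subst sum_nonneg_eq_0_iff[symmetric]) auto
    then have "\<forall>i\<le>n. k i + xs \<in> C"
      using in_closed_iff_infdist_zero[OF closC Cne] by simp
    then have "\<forall>i\<le>n. k i + xs \<in> (\<lambda>y. (real n / (real n - 1)) *\<^sub>R y) ` L"
      unfolding C_def c_def .
    then show ?thesis by (rule exI)
  next
    case False
    then have Epos: "phi xs > 0" using phinn[of xs] by linarith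
    have "\<forall>i. \<exists>l. l \<in> L \<and> p i = c *\<^sub>R l" using p(1) unfolding C_def by blast
    from choice[OF this] obtain q where q': "\<forall>i. q i \<in> L \<and> p i = c *\<^sub>R q i" by blast
    have q: "\<And>i. q i \<in> L" "\<And>i. p i = c *\<^sub>R q i" using q' by auto
    have qmax: "r i \<bullet> l \<le> r i \<bullet> q i" if "l \<in> L" for i l
    proof -
      have "c *\<^sub>R l \<in> C" using that unfolding C_def by blast
      from var[OF this, of i] have "c * (r i \<bullet> l - r i \<bullet> q i) \<le> 0"
        by (simp add: q(2) inner_diff_right algebra_simps)
      then show ?thesis using cpos by (simp add: mult_le_0_iff)
    qed
    have core: "(real n - 1) * (\<Sum>i\<le>n. k i \<bullet> r i) \<le> real n * (\<Sum>i\<le>n. q i \<bullet> r i)"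
      by (rule fin_core[OF n cK kK hyp q(1) qmax rs])
    have "c * (\<Sum>i\<le>n. q i \<bullet> r i) - (\<Sum>i\<le>n. k i \<bullet> r i) = (\<Sum>i\<le>n. r i \<bullet> (p i - k i))"
    proof -
      have "c * (\<Sum>i\<le>n. q i \<bullet> r i) - (\<Sum>i\<le>n. k i \<bullet> r i) = (\<Sum>i\<le>n. c * (q i \<bullet> r i) - k i \<bullet> r i)"
        by (simp only: sum_distrib_left sum_subtractf)
      also have "\<dots> = (\<Sum>i\<le>n. r i \<bullet> (p i - k i))"
        by (intro sum.cong refl) (simp add: q(2) inner_diff_right inner_commute)
      finally show ?thesis .
    qed
    also have "\<dots> = (\<Sum>i\<le>n. r i \<bullet> xs - (norm (r i))\<^sup>2)"
      by (intro sum.cong) (auto simp: r_def inner_diff_right inner_add_right power2_norm_eq_inner algebra_simps)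
    also have "\<dots> = R \<bullet> xs - phi xs"
      by (simp add: sum_subtractf R_def inner_sum_left phixs)
    finally have "c * (\<Sum>i\<le>n. q i \<bullet> r i) - (\<Sum>i\<le>n. k i \<bullet> r i) = - phi xs" using R0 by simp
    then have "(real n - 1) * (c * (\<Sum>i\<le>n. q i \<bullet> r i)) = (real n - 1) * ((\<Sum>i\<le>n. k i \<bullet> r i) - phi xs)"
      by simp
    then have "real n * (\<Sum>i\<le>n. q i \<bullet> r i) = (real n - 1) * (\<Sum>i\<le>n. k i \<bullet> r i) - (real n - 1) * phi xs"
      by (simp add: mult.assoc[symmetric] cn right_diff_distrib)
    moreover have "(real n - 1) * phi xs > 0" using n2 Epos by simp
    ultimately show ?thesis using core by linarith
  qed
qed

theorem mainTheorem8:
  fixes K L :: "'a::euclidean_space set"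
  assumes "DIM('a) \<ge> 2"
    and "compact K" and "convex K" and "compact L" and "convex L"
    and "\<And>u. norm u = 1 \<Longrightarrow> contains_translate (proj_hyp u L) (proj_hyp u K)"
  shows "\<exists>x. (\<lambda>y. y + x) ` K \<subseteq>
           (\<lambda>y. (real DIM('a) / (real DIM('a) - 1)) *\<^sub>R y) ` L"
proof -
  define n where "n = DIM('a)"
  have n: "DIM('a) = n" unfolding n_def ..
  have n2: "n \<ge> 2" using assms(1) n by simp
  define c where "c = real DIM('a) / (real DIM('a) - 1)"
  define C where "C = (\<lambda>y. c *\<^sub>R y) ` L"
  show ?thesis
  proof (cases "K = {}")
    case True then show ?thesis by simp
  next
    case False
    then obtain k0 where k0: "k0 \<in> K" by blast
    define g where "g k = (+) (-k) ` C" for k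
    have memg: "x \<in> g k \<longleftrightarrow> k + x \<in> C" for x k
    proof
      assume "x \<in> g k"
      then obtain p where "p \<in> C" "x = -k + p" unfolding g_def by blast
      then show "k + x \<in> C" by simp
    next
      assume "k + x \<in> C"
      moreover have "x = -k + (k + x)" by simp
      ultimately show "x \<in> g k" unfolding g_def by blast
    qed
    have compC: "compact C" unfolding C_def by (rule compact_scaling[OF assms(4)])
    have convC: "convex C" unfolding C_def by (rule convex_scaling[OF assms(5)])
    have compg: "compact (g k)" for k unfolding g_def by (rule compact_translation[OF compC])
    have convg: "convex (g k)" for k unfolding g_def by (rule convex_translation[OF convC])
    have fin2: "\<exists>x. \<forall>s\<in>S'. s + x \<in> C"
      if S': "finite S'" "S' \<subseteq> K" "S' \<noteq> {}" "card S' \<le> n + 1" for S'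
    proof -
      obtain h where h: "bij_betw h {0..<card S'} S'" using ex_bij_betw_nat_finite[OF S'(1)] by blast
      have m0: "card S' > 0" using S' by (simp add: card_gt_0_iff)
      define k where "k i = h (if i < card S' then i else 0)" for i
      have kS: "k i \<in> S'" for i
        unfolding k_def using bij_betw_apply[OF h] m0 by auto
      have kK: "\<And>i. i \<le> n \<Longrightarrow> k i \<in> K" using kS S'(2) by blast
      obtain x where x: "\<forall>i\<le>n. k i + x \<in> (\<lambda>y. (real n / (real n - 1)) *\<^sub>R y) ` L"
      proof -
        have "\<exists>x. \<forall>i\<le>n. k i + x \<in> (\<lambda>y. (real n / (real n - 1)) *\<^sub>R y) ` L"
          apply (rule fin_exists[OF n n2 assms(3) assms(5) assms(4)])
          using assms(6) kK by auto
        then show ?thesis using that by blast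
      qed
      have "s + x \<in> C" if sS: "s \<in> S'" for s
      proof -
        have "s \<in> h ` {0..<card S'}" using sS h by (simp add: bij_betw_def)
        then obtain j where j: "j < card S'" "s = h j" by auto
        then have "k j = s" "j \<le> n" unfolding k_def using S'(4) by auto
        then show ?thesis using x unfolding C_def c_def n by auto
      qed
      then show ?thesis by blast
    qed
    have fing: "\<Inter>G \<noteq> {}" if G: "finite G" "G \<subseteq> g ` K" "card G \<le> n + 1" for G
    proof (cases "G = {}")
      case True then show ?thesis by simp
    next
      case False
      obtain S' where S': "S' \<subseteq> K" "inj_on g S'" "G = g ` S'"
        using G(2) unfolding subset_image_inj by blast
      have finS: "finite S'" using G(1) S' finite_imageD by blast
      have cS: "card S' = card G" using S' by (simp add: card_image)
      have "S' \<noteq> {}" using False S' by blast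
      then obtain x where x: "\<forall>s\<in>S'. s + x \<in> C" using fin2[OF finS S'(1)] cS G(3) by auto
      have "x \<in> \<Inter>G" using x memg S'(3) by auto
      then show ?thesis by blast
    qed
    have allG: "\<Inter>G \<noteq> {}" if G: "finite G" "G \<subseteq> g ` K" for G
    proof (cases "card G \<le> n + 1")
      case True then show ?thesis using fing G by blast
    next
      case False
      show ?thesis
      proof (rule Helly)
        show "DIM('a) + 1 \<le> card G" using False n by simp
        show "\<forall>s\<in>G. convex s" using G(2) convg by blast
        show "\<Inter>t \<noteq> {}" if "t \<subseteq> G" "card t = DIM('a) + 1" for t
        proof (rule fing)
          show "finite t" using that(1) G(1) by (rule finite_subset)
          show "t \<subseteq> g ` K" using that(1) G(2) by blast
          show "card t \<le> n + 1" using that(2) n by simp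
        qed
      qed
    qed
    have "g k0 \<inter> \<Inter>(g ` K) \<noteq> {}"
    proof (rule compact_imp_fip[OF compg])
      show "closed T" if "T \<in> g ` K" for T using that compg compact_imp_closed by blast
      show "g k0 \<inter> \<Inter>F' \<noteq> {}" if "finite F'" "F' \<subseteq> g ` K" for F'
      proof -
        have "\<Inter>(insert (g k0) F') \<noteq> {}" using allG[of "insert (g k0) F'"] that k0 by blast
        then show ?thesis by simp
      qed
    qed
    then obtain x where x: "x \<in> \<Inter>(g ` K)" by blast
    have "(\<lambda>y. y + x) ` K \<subseteq> C"
    proof
      fix z assume "z \<in> (\<lambda>y. y + x) ` K"
      then obtain y where "y \<in> K" "z = y + x" by blast
      then show "z \<in> C" using x memg by blast
    qed
    then show ?thesis unfolding C_def c_def by blast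
  qed
qed

end
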